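(* Let $l$ be a prime number and let $a,b,c\in\mathbb{Z}$ satisfy $\gcd(a,b)=1$ and $$(a-b)^4+a^4+(a+b)^4=c^l,$$ equivalently $c^l=3a^4+12a^2b^2+2b^4$. Then $c$ is not divisible by $2$, $3$ or $5$; consequently $a$ is odd and $b$ is not divisible by $3$. *)

theory Defs
  imports "HOL-Computational_Algebra.Primes"
begin

end

theory Submission
  imports Defs "HOL-Number_Theory.Cong"
begin

lemma Nmod: "(3*a^4+12*a^2*b^2+2*b^4) mod m = (3*(a mod m)^4 + 12*(a mod m)^2*(b mod m)^2 + 2*(b mod m)^4) mod (m::int)"
proof -
  have "[3*a^4+12*a^2*b^2+2*b^4 = 3*(a mod m)^4 + 12*(a mod m)^2*(b mod m)^2 + 2*(b mod m)^4] (mod m)"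
    by (intro cong_add cong_mult cong_pow cong_refl) (simp_all add: cong_def)
  then show ?thesis by (simp add: cong_def)
qed

lemma sq_dvd: assumes "prime l" "p dvd c" shows "p^2 dvd (c::int)^l"
proof -
  have "l \<ge> 2" using assms(1) prime_ge_2_nat by blast
  then have "c^l = c^2 * c^(l-2)" by (metis le_add_diff_inverse power_add)
  moreover have "p^2 dvd c^2" using assms(2) by simp
  ultimately show ?thesis by simp
qed

lemma five: assumes "(3*a^4+12*a^2*b^2+2*b^4) mod 5 = (0::int)" shows "a mod 5 = 0 \<and> b mod 5 = 0"
proof -
  have a: "a mod 5 = 0 \<or> a mod 5 = 1 \<or> a mod 5 = 2 \<or> a mod 5 = 3 \<or> a mod 5 = 4" by presburger
  have b: "b mod 5 = 0 \<or> b mod 5 = 1 \<or> b mod 5 = 2 \<or> b mod 5 = 3 \<or> b mod 5 = 4" by presburger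
  show ?thesis using assms a b by (simp only: Nmod[of a b 5]) (elim disjE; simp)
qed

lemma two: assumes "a mod 2 = 0" "b mod 2 = 1"
  shows "(3*a^4+12*a^2*b^2+2*b^4) mod 4 = (2::int)"
proof -
  have a: "a mod 4 = 0 \<or> a mod 4 = 2" using assms(1) by presburger
  have b: "b mod 4 = 1 \<or> b mod 4 = 3" using assms(2) by presburger
  show ?thesis using a b by (simp only: Nmod[of a b 4]) (elim disjE; simp)
qed

lemma three: assumes "a mod 3 \<noteq> 0" "b mod 3 = 0"
  shows "(3*a^4+12*a^2*b^2+2*b^4) mod 9 = (3::int)"
proof -
  have a: "a mod 9 = 1 \<or> a mod 9 = 2 \<or> a mod 9 = 4 \<or> a mod 9 = 5 \<or> a mod 9 = 7 \<or> a mod 9 = 8" using assms(1) by presburger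
  have b: "b mod 9 = 0 \<or> b mod 9 = 3 \<or> b mod 9 = 6" using assms(2) by presburger
  show ?thesis using a b by (simp only: Nmod[of a b 9]) (elim disjE; simp)
qed

theorem proposition2p1:
  fixes l :: nat and a b c :: int
  assumes "prime l"
    and "gcd a b = 1"
    and "(a - b) ^ 4 + a ^ 4 + (a + b) ^ 4 = c ^ l"
  shows "\<not> (2 dvd c) \<and> \<not> (3 dvd c) \<and> \<not> (5 dvd c) \<and> odd a \<and> \<not> (3 dvd b)"
proof -
  define N where "N = 3*a^4+12*a^2*b^2+2*b^4"
  have NE: "N = c^l" unfolding N_def using assms(3) by (simp add: algebra_simps power4_eq_xxxx power2_eq_square)
  have cop: "\<not> (p dvd a \<and> p dvd b)" if "p > 1" for p :: int
  proof
    assume "p dvd a \<and> p dvd b"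
    then have "p dvd gcd a b" by simp
    then show False using assms(2) that by (simp add: zdvd_imp_le)
  qed
  have c5: "\<not> 5 dvd c"
  proof
    assume "5 dvd c"
    then have "5 dvd c^l" using assms(1) prime_gt_0_nat by (meson dvd_power dvd_trans)
    then have "N mod 5 = 0" using NE by simp
    then show False using five[of a b] cop[of 5] unfolding N_def by (auto simp: dvd_eq_mod_eq_0)
  qed
  have c2: "\<not> 2 dvd c"
  proof
    assume h: "2 dvd c"
    then have "2 dvd c^l" using assms(1) prime_gt_0_nat by (meson dvd_power dvd_trans)
    then have "N mod 2 = 0" using NE by simp
    then have "a mod 2 = 0" unfolding N_def by (simp add: even_iff_mod_2_eq_zero[symmetric])
    then have "b mod 2 = 1" using cop[of 2] by presburger
    then have "N mod 4 = 2" unfolding N_def by (rule two[OF \<open>a mod 2 = 0\<close>])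
    moreover have "4 dvd N" using sq_dvd[OF assms(1) h] NE by simp
    ultimately show False by presburger
  qed
  have c3: "\<not> 3 dvd c"
  proof
    assume h: "3 dvd c"
    then have "3 dvd c^l" using assms(1) prime_gt_0_nat by (meson dvd_power dvd_trans)
    then have "3 dvd N" using NE by simp
    moreover have "N = 3*(a^4+4*a^2*b^2) + 2*b^4" unfolding N_def by simp
    ultimately have "3 dvd 2*b^4" by (metis dvd_add_right_iff dvd_triv_left)
    then have "3 dvd b^4" using prime_dvd_mult_iff[of "3::int" 2 "b^4"] by (simp add: prime_dvd_mult_iff)
    then have "3 dvd b" using prime_dvd_power_iff[of "3::int" 4 b] by simp
    then have "a mod 3 \<noteq> 0" using cop[of 3] by presburger
    then have "N mod 9 = 3" using three \<open>3 dvd b\<close> unfolding N_def by presburger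
    moreover have "9 dvd N" using sq_dvd[OF assms(1) h] NE by simp
    ultimately show False by presburger
  qed
  have oa: "odd a"
  proof
    assume "even a"
    then have "2 dvd N" unfolding N_def by simp
    then have "2 dvd c^l" using NE by simp
    then show False using c2 prime_dvd_power_iff[of "2::int" l c] assms(1) prime_gt_0_nat by auto
  qed
  have b3: "\<not> 3 dvd b"
  proof
    assume "3 dvd b"
    then have "3 dvd b^4" by (meson dvd_power dvd_trans zero_less_numeral)
    then have "3 dvd 3*(a^4+4*a^2*b^2) + 2*b^4" by simp
    then have "3 dvd N" unfolding N_def by (simp add: mult.assoc)
    then have "3 dvd c^l" using NE by simp
    then show False using c3 prime_dvd_power_iff[of "3::int" l c] assms(1) prime_gt_0_nat by auto
  qed
  show ?thesis using c2 c3 c5 oa b3 by blast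
qed

end
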